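(* Let $d_{\mathbb Z}$ be a metric on $\mathbb Z$. For every $\lambda\in\mathbb R\setminus\{0\}$, the operator $D_\lambda=D_{\mathbb Z}+\lambda X$ on $\ell^2(\mathbb Z)\otimes\mathbb C^2$ is selfadjoint with compact resolvent.
   Context: Write $\delta_n=d_{\mathbb Z}(n,n-1)$. On $\ell^2(\mathbb Z)$, $(\nabla f)_n=\frac{f_n-f_{n-1}}{i\,\delta_n}$. On $\ell^2(\mathbb Z)\otimes\mathbb C^2$, $D_{\mathbb Z}=\begin{pmatrix}0&\nabla\\ \nabla^*&0\end{pmatrix}$, and $(Xf)_n=c_nc_{n+1}\sigma_3f_n$ with $\sigma_3=\mathrm{diag}(1,-1)$, where $(c_n)_{n\in\mathbb Z}$ is a real sequence with $c_n\to+\infty$ as $|n|\to\infty$ and $c_n\delta_n\ge1$ for all $n$. *)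

theory Defs
  imports "HOL-Analysis.Analysis"
begin

text \<open>Elements of l2(Z) (x) C^2 are represented as functions int => complex * complex.\<close>

type_synonym vec = "int \<Rightarrow> complex \<times> complex"

definition l2 :: "vec set" where
  "l2 = {f. (\<lambda>n. (cmod (fst (f n)))\<^sup>2 + (cmod (snd (f n)))\<^sup>2) summable_on UNIV}"

definition l2norm :: "vec \<Rightarrow> real" where
  "l2norm f = sqrt (\<Sum>\<^sub>\<infinity>n. (cmod (fst (f n)))\<^sup>2 + (cmod (snd (f n)))\<^sup>2)"

definition l2inner :: "vec \<Rightarrow> vec \<Rightarrow> complex" where
  "l2inner f g = (\<Sum>\<^sub>\<infinity>n. cnj (fst (f n)) * fst (g n) + cnj (snd (f n)) * snd (g n))"

definition vsub :: "vec \<Rightarrow> vec \<Rightarrow> vec" where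
  "vsub f g = (\<lambda>n. (fst (f n) - fst (g n), snd (f n) - snd (g n)))"

definition vscale :: "complex \<Rightarrow> vec \<Rightarrow> vec" where
  "vscale z f = (\<lambda>n. (z * fst (f n), z * snd (f n)))"

definition delta :: "(int \<Rightarrow> int \<Rightarrow> real) \<Rightarrow> int \<Rightarrow> real" where
  "delta d n = d n (n - 1)"

definition grad :: "(int \<Rightarrow> int \<Rightarrow> real) \<Rightarrow> (int \<Rightarrow> complex) \<Rightarrow> int \<Rightarrow> complex" where
  "grad d f n = (f n - f (n - 1)) / (\<i> * complex_of_real (delta d n))"

definition grad_adj :: "(int \<Rightarrow> int \<Rightarrow> real) \<Rightarrow> (int \<Rightarrow> complex) \<Rightarrow> int \<Rightarrow> complex" where
  "grad_adj d g n = \<i> * (g n / complex_of_real (delta d n) - g (n + 1) / complex_of_real (delta d (n + 1)))"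

text \<open>D_lambda = D_Z + lambda X acting (formally) on sequences,
  D_Z = [[0, nabla], [nabla^*, 0]], (X f)_n = c_n c_{n+1} sigma_3 f_n.\<close>
definition Dlam :: "(int \<Rightarrow> int \<Rightarrow> real) \<Rightarrow> (int \<Rightarrow> real) \<Rightarrow> real \<Rightarrow> vec \<Rightarrow> vec" where
  "Dlam d c lam f = (\<lambda>n.
     (grad d (\<lambda>m. snd (f m)) n + complex_of_real (lam * c n * c (n + 1)) * fst (f n),
      grad_adj d (\<lambda>m. fst (f m)) n - complex_of_real (lam * c n * c (n + 1)) * snd (f n)))"

definition Dlam_dom :: "(int \<Rightarrow> int \<Rightarrow> real) \<Rightarrow> (int \<Rightarrow> real) \<Rightarrow> real \<Rightarrow> vec set" where
  "Dlam_dom d c lam = {f \<in> l2. Dlam d c lam f \<in> l2}"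

text \<open>Selfadjointness of a densely defined operator (Dom, A) on l2: A = A^*,
  where dom A^* = {g | exists h in l2, for all f in Dom, <Af,g> = <f,h>} and A^* g = h.\<close>
definition selfadjoint_op :: "vec set \<Rightarrow> (vec \<Rightarrow> vec) \<Rightarrow> bool" where
  "selfadjoint_op Dom A \<longleftrightarrow>
     Dom \<subseteq> l2 \<and> (\<forall>f\<in>Dom. A f \<in> l2) \<and>
     (\<forall>g\<in>l2. \<forall>e>0. \<exists>f\<in>Dom. l2norm (vsub g f) < e) \<and>
     (\<forall>g\<in>l2. (\<exists>h\<in>l2. \<forall>f\<in>Dom. l2inner (A f) g = l2inner f h) \<longleftrightarrow> g \<in> Dom) \<and>
     (\<forall>f\<in>Dom. \<forall>g\<in>Dom. l2inner (A f) g = l2inner f (A g))"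

definition compact_l2op :: "(vec \<Rightarrow> vec) \<Rightarrow> bool" where
  "compact_l2op R \<longleftrightarrow> (\<forall>x :: nat \<Rightarrow> vec. (\<forall>k. x k \<in> l2) \<and> (\<exists>B. \<forall>k. l2norm (x k) \<le> B) \<longrightarrow>
      (\<exists>r u. strict_mono r \<and> u \<in> l2 \<and> (\<lambda>k. l2norm (vsub (R (x (r k))) u)) \<longlonglongrightarrow> 0))"

definition compact_resolvent :: "vec set \<Rightarrow> (vec \<Rightarrow> vec) \<Rightarrow> bool" where
  "compact_resolvent Dom A \<longleftrightarrow> (\<exists>z R.
     (\<forall>u\<in>l2. R u \<in> Dom \<and> vsub (A (R u)) (vscale z (R u)) = u) \<and>
     (\<forall>f\<in>Dom. R (vsub (A f) (vscale z f)) = f) \<and>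
     compact_l2op R)"

end

theory Submission
  imports Defs
begin

definition nrm :: "vec \<Rightarrow> int \<Rightarrow> real" where
  "nrm f n = (cmod (fst (f n)))\<^sup>2 + (cmod (snd (f n)))\<^sup>2"

definition QN :: "vec \<Rightarrow> real" where
  "QN f = (\<Sum>\<^sub>\<infinity>n. nrm f n)"

lemma nrm_norm: "nrm f n = (norm (f n))\<^sup>2"
proof -
  obtain a b where "f n = (a, b)" by (cases "f n")
  thus ?thesis by (simp add: nrm_def norm_Pair)
qed

lemma nrm_nonneg[simp]: "0 \<le> nrm f n"
  by (simp add: nrm_def)

lemma l2_iff: "f \<in> l2 \<longleftrightarrow> nrm f summable_on UNIV"
  by (simp add: l2_def nrm_def[abs_def])

lemma l2norm_QN: "l2norm f = sqrt (QN f)"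
  by (simp add: l2norm_def QN_def nrm_def)

lemma QN_nonneg: "0 \<le> QN f"
  unfolding QN_def by (rule infsum_nonneg) simp

lemma vsub_eq: "vsub f g n = f n - g n"
  by (simp add: vsub_def prod_eq_iff)

lemma shift_summable:
  fixes g :: "int \<Rightarrow> 'a::{comm_monoid_add,topological_space}"
  shows "(\<lambda>n. g (n + k)) summable_on UNIV \<longleftrightarrow> g summable_on UNIV"
proof -
  have "inj_on (\<lambda>n::int. n + k) UNIV" by (simp add: inj_on_def)
  moreover have "(\<lambda>n::int. n + k) ` UNIV = UNIV"
    by (metis (no_types, lifting) diff_add_cancel surj_def)
  ultimately show ?thesis
    using summable_on_reindex[of "\<lambda>n. n + k" UNIV g] by (simp add: o_def)
qed

lemma shift_infsum:
  fixes g :: "int \<Rightarrow> 'a::{comm_monoid_add,t2_space}"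
  shows "(\<Sum>\<^sub>\<infinity>n. g (n + k)) = (\<Sum>\<^sub>\<infinity>n. g n)"
proof -
  have "inj_on (\<lambda>n::int. n + k) UNIV" by (simp add: inj_on_def)
  moreover have "(\<lambda>n::int. n + k) ` UNIV = UNIV"
    by (metis (no_types, lifting) diff_add_cancel surj_def)
  ultimately show ?thesis
    using infsum_reindex[of "\<lambda>n. n + k" UNIV g] by (simp add: o_def)
qed

lemma shift_summable_m:
  fixes g :: "int \<Rightarrow> 'a::{comm_monoid_add,topological_space}"
  shows "(\<lambda>n. g (n - k)) summable_on UNIV \<longleftrightarrow> g summable_on UNIV"
  using shift_summable[of g "-k"] by simp

lemma shift_infsum_m:
  fixes g :: "int \<Rightarrow> 'a::{comm_monoid_add,t2_space}"
  shows "(\<Sum>\<^sub>\<infinity>n. g (n - k)) = (\<Sum>\<^sub>\<infinity>n. g n)"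
  using shift_infsum[of g "-k"] by simp

lemma real_dom_summable:
  fixes f g :: "int \<Rightarrow> real"
  assumes "g summable_on UNIV" "\<And>n. 0 \<le> f n" "\<And>n. f n \<le> g n"
  shows "f summable_on UNIV"
  using summable_on_comparison_test[of g UNIV f] assms by auto

lemma cplx_dom_summable:
  fixes f :: "int \<Rightarrow> complex" and g :: "int \<Rightarrow> real"
  assumes "g summable_on UNIV" "\<And>n. norm (f n) \<le> g n"
  shows "f summable_on UNIV"
proof -
  have "(\<lambda>x. norm (f x)) summable_on UNIV"
    by (rule real_dom_summable[OF assms(1)]) (use assms in auto)
  thus ?thesis using summable_on_iff_abs_summable_on_complex by blast
qed

lemma prod_le_sq: "(x::real) * y \<le> (x\<^sup>2 + y\<^sup>2) / 2"
proof -
  have "0 \<le> (x - y)\<^sup>2" by simp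
  thus ?thesis by (simp add: power2_eq_square algebra_simps)
qed

lemma sum_sq_le: "((x::real) + y)\<^sup>2 \<le> 2 * x\<^sup>2 + 2 * y\<^sup>2"
proof -
  have "0 \<le> (x - y)\<^sup>2" by simp
  thus ?thesis by (simp add: power2_eq_square algebra_simps)
qed

lemma summ_prod:
  fixes t :: "int \<Rightarrow> complex"
  assumes "A summable_on UNIV" "B summable_on UNIV"
    and "\<And>n. norm (t n) \<le> X n * Y n" "\<And>n. 0 \<le> X n" "\<And>n. 0 \<le> Y n"
    and "\<And>n. (X n)\<^sup>2 \<le> A n" "\<And>n. (Y n)\<^sup>2 \<le> B n"
  shows "t summable_on UNIV"
proof (rule cplx_dom_summable)
  show "(\<lambda>n. (A n + B n) / 2) summable_on UNIV"
    using summable_on_cmult_right[OF summable_on_add[OF assms(1,2)], of "1/2"] by simp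
  fix n
  have "norm (t n) \<le> X n * Y n" by fact
  also have "\<dots> \<le> ((X n)\<^sup>2 + (Y n)\<^sup>2) / 2" by (rule prod_le_sq)
  also have "\<dots> \<le> (A n + B n) / 2" using assms(6,7)[of n] by simp
  finally show "norm (t n) \<le> (A n + B n) / 2" .
qed

lemma norm_diff_sq: "(norm ((x::'a::real_normed_vector) - y))\<^sup>2 \<le> 2 * (norm x)\<^sup>2 + 2 * (norm y)\<^sup>2"
proof -
  have "norm (x - y) \<le> norm x + norm y" by (rule norm_triangle_ineq4)
  hence "(norm (x - y))\<^sup>2 \<le> (norm x + norm y)\<^sup>2" by (simp add: power_mono)
  thus ?thesis using sum_sq_le[of "norm x" "norm y"] by linarith
qed

lemma norm_add_sq: "(norm ((x::'a::real_normed_vector) + y))\<^sup>2 \<le> 2 * (norm x)\<^sup>2 + 2 * (norm y)\<^sup>2"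
  using norm_diff_sq[of x "-y"] by simp

lemma single_le_infsum:
  fixes f :: "int \<Rightarrow> real"
  assumes "f summable_on UNIV" "\<And>n. 0 \<le> f n"
  shows "f n \<le> (\<Sum>\<^sub>\<infinity>m. f m)"
proof -
  have "infsum f {n} \<le> infsum f UNIV"
    by (rule infsum_mono_neutral) (use assms in auto)
  thus ?thesis by simp
qed

lemma finite_sum_le_infsum:
  fixes f :: "int \<Rightarrow> real"
  assumes "f summable_on UNIV" "\<And>n. 0 \<le> f n" "finite F"
  shows "sum f F \<le> (\<Sum>\<^sub>\<infinity>m. f m)"
proof -
  have "infsum f F \<le> infsum f UNIV"
    by (rule infsum_mono_neutral) (use assms in auto)
  thus ?thesis using assms by simp
qed

lemma extract_sub:
  fixes x :: "nat \<Rightarrow> int \<Rightarrow> complex \<times> complex"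
  assumes "\<And>k n. norm (x k n) \<le> B n"
  shows "\<exists>r g. strict_mono r \<and> (\<forall>n. (\<lambda>k. x (r k) n) \<longlonglongrightarrow> g n)"
proof -
  have "compactin (product_topology (\<lambda>_. euclidean) UNIV) (PiE UNIV (\<lambda>n::int. cball (0::complex\<times>complex) (B n)))"
    by (simp add: compactin_PiE compact_cball)
  hence "compact (PiE UNIV (\<lambda>n::int. cball (0::complex\<times>complex) (B n)))"
    using compactin_euclidean_iff euclidean_product_topology by metis
  hence "seq_compact (PiE UNIV (\<lambda>n::int. cball (0::complex\<times>complex) (B n)))"
    by (rule compact_imp_seq_compact)
  moreover have "\<forall>k. x k \<in> PiE UNIV (\<lambda>n::int. cball (0::complex\<times>complex) (B n))"
    using assms by (auto simp: PiE_def)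
  ultimately obtain g r where "strict_mono r" "(x \<circ> r) \<longlonglongrightarrow> g"
    unfolding seq_compact_def by metis
  moreover have "\<forall>n. (\<lambda>k. x (r k) n) \<longlonglongrightarrow> g n"
  proof
    fix n
    show "(\<lambda>k. x (r k) n) \<longlonglongrightarrow> g n"
      using continuous_on_tendsto_compose[OF continuous_on_product_coordinates[of n] \<open>(x \<circ> r) \<longlonglongrightarrow> g\<close>]
      by (simp add: o_def)
  qed
  ultimately show ?thesis by blast
qed

lemma div_le_helper:
  fixes x r dl :: real
  assumes "0 \<le> x" "8 / dl \<le> r" "0 < dl"
  shows "x / dl \<le> r * x / 8"
proof -
  have "x * (8 / dl) \<le> x * r" using assms by (intro mult_left_mono) auto
  moreover have "x / dl = x * (8 / dl) / 8" by simp
  ultimately show ?thesis by (simp add: mult.commute)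
qed

locale setting =
  fixes d :: "int \<Rightarrow> int \<Rightarrow> real" and c :: "int \<Rightarrow> real" and lam :: real
  assumes dpos: "\<And>n. delta d n > 0"
    and cdel: "\<And>n. c n * delta d n \<ge> 1"
    and cfin: "\<And>T. finite {n. c n < T}"
    and lam: "lam \<noteq> 0"
begin

lemma cpos: "c n > 0"
proof (rule ccontr)
  assume "\<not> c n > 0"
  hence "c n * delta d n \<le> 0" using dpos[of n] by (simp add: mult_nonpos_nonneg)
  thus False using cdel[of n] by simp
qed

lemma inv_delta_le: "1 / delta d n \<le> c n"
  using cdel[of n] dpos[of n] by (simp add: divide_le_eq mult.commute)

lemma cfin1: "finite {n. c (n + 1) < T}"
proof -
  have "{n. c (n + 1) < T} = (\<lambda>n. n + 1) -` {n. c n < T}" by auto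
  moreover have "inj (\<lambda>n::int. n + 1)" by (simp add: inj_on_def)
  ultimately show ?thesis using finite_vimageI[OF cfin] by metis
qed

definition w :: "int \<Rightarrow> real" where "w n = lam * c n * c (n + 1)"

lemma mu_ex: "\<exists>\<mu>>0. \<forall>n. 8 * c n \<le> sqrt ((w n)\<^sup>2 + \<mu>\<^sup>2) \<and> 8 * c (n + 1) \<le> sqrt ((w n)\<^sup>2 + \<mu>\<^sup>2)"
proof -
  define T where "T = 8 / \<bar>lam\<bar>"
  define S where "S = {n. c n < T} \<union> {n. c (n + 1) < T}"
  have fS: "finite S" unfolding S_def using cfin cfin1 by simp
  define \<mu> where "\<mu> = 8 * (\<Sum>n\<in>S. c n + c (n + 1)) + 1"
  have nn: "0 \<le> (\<Sum>n\<in>S. c n + c (n + 1))"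
    by (rule sum_nonneg) (simp add: add_nonneg_nonneg cpos less_imp_le)
  have mpos: "\<mu> > 0" unfolding \<mu>_def using nn by simp
  have "8 * c n \<le> sqrt ((w n)\<^sup>2 + \<mu>\<^sup>2) \<and> 8 * c (n + 1) \<le> sqrt ((w n)\<^sup>2 + \<mu>\<^sup>2)" for n
  proof -
    have r1: "\<mu> \<le> sqrt ((w n)\<^sup>2 + \<mu>\<^sup>2)"
      using mpos by (simp add: real_le_rsqrt)
    have r2: "\<bar>w n\<bar> \<le> sqrt ((w n)\<^sup>2 + \<mu>\<^sup>2)"
      by (simp add: real_le_rsqrt)
    show ?thesis
    proof (cases "n \<in> S")
      case True
      have "c n + c (n + 1) \<le> (\<Sum>n\<in>S. c n + c (n + 1))"
        by (rule member_le_sum[OF True]) (simp_all add: fS add_nonneg_nonneg cpos less_imp_le)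
      thus ?thesis using r1 cpos[of n] cpos[of "n+1"] unfolding \<mu>_def by linarith
    next
      case False
      hence ge: "T \<le> c n" "T \<le> c (n + 1)" unfolding S_def by auto
      have aw: "\<bar>w n\<bar> = \<bar>lam\<bar> * c n * c (n + 1)"
        unfolding w_def using cpos[of n] cpos[of "n+1"] by (simp add: abs_mult)
      have lT: "\<bar>lam\<bar> * T = 8" unfolding T_def using lam by simp
      have "8 * c n = \<bar>lam\<bar> * T * c n" using lT by simp
      also have "\<dots> \<le> \<bar>lam\<bar> * c (n + 1) * c n"
        using ge cpos[of n] by (simp add: mult_right_mono mult_left_mono)
      finally have a: "8 * c n \<le> \<bar>w n\<bar>" using aw by (simp add: mult_ac)
      have "8 * c (n + 1) = \<bar>lam\<bar> * T * c (n + 1)" using lT by simp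
      also have "\<dots> \<le> \<bar>lam\<bar> * c n * c (n + 1)"
        using ge cpos[of "n+1"] by (simp add: mult_right_mono mult_left_mono)
      finally have b: "8 * c (n + 1) \<le> \<bar>w n\<bar>" using aw by (simp add: mult_ac)
      show ?thesis using a b r2 by linarith
    qed
  qed
  thus ?thesis using mpos by blast
qed

definition mu :: real where
  "mu = (SOME \<mu>. \<mu> > 0 \<and> (\<forall>n. 8 * c n \<le> sqrt ((w n)\<^sup>2 + \<mu>\<^sup>2) \<and> 8 * c (n + 1) \<le> sqrt ((w n)\<^sup>2 + \<mu>\<^sup>2)))"

lemma mu_props: "mu > 0" "\<And>n. 8 * c n \<le> sqrt ((w n)\<^sup>2 + mu\<^sup>2)" "\<And>n. 8 * c (n + 1) \<le> sqrt ((w n)\<^sup>2 + mu\<^sup>2)"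
  using someI_ex[OF mu_ex] unfolding mu_def[symmetric] by auto

definition rho :: "int \<Rightarrow> real" where "rho n = sqrt ((w n)\<^sup>2 + mu\<^sup>2)"

lemma rho_sq: "(rho n)\<^sup>2 = (w n)\<^sup>2 + mu\<^sup>2"
  unfolding rho_def by simp

lemma mu_le_rho: "mu \<le> rho n"
  unfolding rho_def using mu_props(1) by (simp add: real_le_rsqrt)

lemma rho_pos: "rho n > 0"
  using mu_le_rho[of n] mu_props(1) by linarith

lemma w_le_rho: "\<bar>w n\<bar> \<le> rho n"
  unfolding rho_def by (simp add: real_le_rsqrt)

lemma ad1: "8 / delta d n \<le> rho n"
proof -
  have "8 / delta d n = 8 * (1 / delta d n)" by simp
  thus ?thesis using inv_delta_le[of n] mu_props(2)[of n] unfolding rho_def by linarith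
qed

lemma ad2: "8 / delta d (n + 1) \<le> rho n"
proof -
  have "8 / delta d (n + 1) = 8 * (1 / delta d (n + 1))" by simp
  thus ?thesis using inv_delta_le[of "n+1"] mu_props(3)[of n] unfolding rho_def by linarith
qed

definition PX :: "vec \<Rightarrow> int \<Rightarrow> real" where "PX f n = (rho n)\<^sup>2 * nrm f n"

definition DomX :: "vec set" where "DomX = {f. PX f summable_on UNIV}"

lemma PX_nonneg[simp]: "0 \<le> PX f n"
  by (simp add: PX_def)

lemma nrm_le_PX: "mu\<^sup>2 * nrm f n \<le> PX f n"
  unfolding PX_def using mu_le_rho[of n] mu_props(1)
  by (intro mult_right_mono power_mono) auto

lemma DomX_l2: assumes "f \<in> DomX" shows "f \<in> l2"
  unfolding l2_iff
proof (rule real_dom_summable[where g = "\<lambda>n. PX f n / mu\<^sup>2"])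
  have "PX f summable_on UNIV" using assms by (simp add: DomX_def)
  thus "(\<lambda>n. PX f n / mu\<^sup>2) summable_on UNIV"
    using summable_on_cmult_right[of "PX f" UNIV "1/mu\<^sup>2"] by simp
  fix n show "0 \<le> nrm f n" by simp
  show "nrm f n \<le> PX f n / mu\<^sup>2" using nrm_le_PX[of f n] mu_props(1)
    by (simp add: le_divide_eq mult.commute)
qed

definition Dz :: "vec \<Rightarrow> vec" where
  "Dz f = (\<lambda>n. (grad d (\<lambda>m. snd (f m)) n, grad_adj d (\<lambda>m. fst (f m)) n))"

definition W :: "int \<Rightarrow> complex" where "W n = complex_of_real (w n)"

lemma Dlam_eq: "Dlam d c lam f n = (fst (Dz f n) + W n * fst (f n), snd (Dz f n) - W n * snd (f n))"
  by (simp add: Dlam_def Dz_def W_def w_def)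

lemma DZB: "nrm (Dz f) n \<le> (PX f n + PX f (n - 1) + PX f (n + 1)) / 32"
proof -
  define u where "u m = fst (f m)" for m
  define v where "v m = snd (f m)" for m
  have dn: "0 < delta d n" "0 < delta d (n+1)" using dpos by auto
  have e1: "cmod (grad d v n) = cmod (v n - v (n - 1)) / delta d n"
    unfolding grad_def using dn by (simp add: norm_divide norm_mult)
  have "cmod (grad d v n) \<le> (cmod (v n) + cmod (v (n - 1))) / delta d n"
    unfolding e1 using dn by (simp add: divide_right_mono norm_triangle_ineq4)
  also have "\<dots> = cmod (v n) / delta d n + cmod (v (n - 1)) / delta d (n - 1 + 1)"
    by (simp add: add_divide_distrib)
  also have "\<dots> \<le> rho n * cmod (v n) / 8 + rho (n - 1) * cmod (v (n - 1)) / 8"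
    by (intro add_mono div_le_helper ad1 ad2 dpos) auto
  finally have g1: "cmod (grad d v n) \<le> (rho n * cmod (v n) + rho (n - 1) * cmod (v (n - 1))) / 8"
    by simp
  have e2: "cmod (grad_adj d u n) = cmod (u n / delta d n - u (n + 1) / delta d (n + 1))"
    unfolding grad_adj_def by (simp add: norm_mult)
  also have "\<dots> \<le> cmod (u n / delta d n) + cmod (u (n + 1) / delta d (n + 1))"
    by (rule norm_triangle_ineq4)
  also have "\<dots> = cmod (u n) / delta d n + cmod (u (n + 1)) / delta d (n + 1)"
    using dn by (simp add: norm_divide)
  also have "\<dots> \<le> rho n * cmod (u n) / 8 + rho (n + 1) * cmod (u (n + 1)) / 8"
    by (intro add_mono div_le_helper ad1 dpos) auto
  finally have g2: "cmod (grad_adj d u n) \<le> (rho n * cmod (u n) + rho (n + 1) * cmod (u (n + 1))) / 8"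
    by simp
  have s1: "(cmod (grad d v n))\<^sup>2 \<le> (2 * (rho n * cmod (v n))\<^sup>2 + 2 * (rho (n - 1) * cmod (v (n - 1)))\<^sup>2) / 64"
  proof -
    have "(cmod (grad d v n))\<^sup>2 \<le> ((rho n * cmod (v n) + rho (n - 1) * cmod (v (n - 1))) / 8)\<^sup>2"
      using g1 by (intro power_mono) auto
    also have "\<dots> = (rho n * cmod (v n) + rho (n - 1) * cmod (v (n - 1)))\<^sup>2 / 64"
      by (simp add: power_divide)
    also have "\<dots> \<le> (2 * (rho n * cmod (v n))\<^sup>2 + 2 * (rho (n - 1) * cmod (v (n - 1)))\<^sup>2) / 64"
      by (intro divide_right_mono sum_sq_le) auto
    finally show ?thesis .
  qed
  have s2: "(cmod (grad_adj d u n))\<^sup>2 \<le> (2 * (rho n * cmod (u n))\<^sup>2 + 2 * (rho (n + 1) * cmod (u (n + 1)))\<^sup>2) / 64"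
  proof -
    have "(cmod (grad_adj d u n))\<^sup>2 \<le> ((rho n * cmod (u n) + rho (n + 1) * cmod (u (n + 1))) / 8)\<^sup>2"
      using g2 by (intro power_mono) auto
    also have "\<dots> = (rho n * cmod (u n) + rho (n + 1) * cmod (u (n + 1)))\<^sup>2 / 64"
      by (simp add: power_divide)
    also have "\<dots> \<le> (2 * (rho n * cmod (u n))\<^sup>2 + 2 * (rho (n + 1) * cmod (u (n + 1)))\<^sup>2) / 64"
      by (intro divide_right_mono sum_sq_le) auto
    finally show ?thesis .
  qed
  have p0: "PX f n = (rho n * cmod (u n))\<^sup>2 + (rho n * cmod (v n))\<^sup>2"
    unfolding PX_def nrm_def u_def v_def by (simp add: power_mult_distrib algebra_simps)
  have p1: "(rho (n - 1) * cmod (v (n - 1)))\<^sup>2 \<le> PX f (n - 1)"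
    unfolding PX_def nrm_def v_def by (simp add: power_mult_distrib algebra_simps)
  have p2: "(rho (n + 1) * cmod (u (n + 1)))\<^sup>2 \<le> PX f (n + 1)"
    unfolding PX_def nrm_def u_def by (simp add: power_mult_distrib algebra_simps)
  have "nrm (Dz f) n = (cmod (grad d v n))\<^sup>2 + (cmod (grad_adj d u n))\<^sup>2"
    unfolding nrm_def Dz_def u_def v_def by simp
  thus ?thesis using s1 s2 p0 p1 p2 by (simp add: field_simps)
qed


lemma sum3_shift:
  fixes g :: "int \<Rightarrow> real"
  assumes "g summable_on UNIV"
  shows "(\<lambda>n. g n + g (n - 1) + g (n + 1)) summable_on UNIV"
    and "(\<Sum>\<^sub>\<infinity>n. g n + g (n - 1) + g (n + 1)) = 3 * (\<Sum>\<^sub>\<infinity>n. g n)"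
proof -
  have a: "(\<lambda>n. g (n - 1)) summable_on UNIV" using assms shift_summable_m by blast
  have b: "(\<lambda>n. g (n + 1)) summable_on UNIV" using assms shift_summable by blast
  show "(\<lambda>n. g n + g (n - 1) + g (n + 1)) summable_on UNIV"
    by (intro summable_on_add assms a b)
  have "(\<Sum>\<^sub>\<infinity>n. g n + g (n - 1) + g (n + 1)) = (\<Sum>\<^sub>\<infinity>n. g n + g (n - 1)) + (\<Sum>\<^sub>\<infinity>n. g (n + 1))"
    by (intro infsum_add summable_on_add assms a b)
  also have "\<dots> = (\<Sum>\<^sub>\<infinity>n. g n) + (\<Sum>\<^sub>\<infinity>n. g (n - 1)) + (\<Sum>\<^sub>\<infinity>n. g (n + 1))"
    by (simp add: infsum_add assms a)
  finally show "(\<Sum>\<^sub>\<infinity>n. g n + g (n - 1) + g (n + 1)) = 3 * (\<Sum>\<^sub>\<infinity>n. g n)"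
    by (simp add: shift_infsum shift_infsum_m)
qed

lemma Dz_bound:
  assumes "f \<in> DomX"
  shows "Dz f \<in> l2" "QN (Dz f) \<le> 3 / 32 * (\<Sum>\<^sub>\<infinity>n. PX f n)"
proof -
  have s: "PX f summable_on UNIV" using assms by (simp add: DomX_def)
  have s2: "(\<lambda>n. (PX f n + PX f (n - 1) + PX f (n + 1)) / 32) summable_on UNIV"
    using summable_on_cmult_right[OF sum3_shift(1)[OF s], of "1/32"] by simp
  show l: "Dz f \<in> l2" unfolding l2_iff
    by (rule real_dom_summable[OF s2]) (simp, rule DZB)
  have "QN (Dz f) \<le> (\<Sum>\<^sub>\<infinity>n. (PX f n + PX f (n - 1) + PX f (n + 1)) / 32)"
    unfolding QN_def by (rule infsum_mono) (use l s2 DZB in \<open>auto simp: l2_iff\<close>)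
  also have "\<dots> = (1/32) * (\<Sum>\<^sub>\<infinity>n. PX f n + PX f (n - 1) + PX f (n + 1))"
    using infsum_cmult_right[of "1/32" "\<lambda>n. PX f n + PX f (n - 1) + PX f (n + 1)" UNIV] sum3_shift(1)[OF s]
    by simp
  also have "\<dots> = 3 / 32 * (\<Sum>\<^sub>\<infinity>n. PX f n)" using sum3_shift(2)[OF s] by simp
  finally show "QN (Dz f) \<le> 3 / 32 * (\<Sum>\<^sub>\<infinity>n. PX f n)" .
qed

lemma Dlam_split: "Dlam d c lam f n = Dz f n + (W n * fst (f n), - (W n * snd (f n)))"
  by (simp add: Dlam_eq prod_eq_iff)

lemma norm_W_part: "(norm (W n * fst (f n), - (W n * snd (f n))))\<^sup>2 \<le> PX f n"
proof -
  have "(norm (W n * fst (f n), - (W n * snd (f n))))\<^sup>2 = (w n)\<^sup>2 * nrm f n"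
    by (simp add: norm_Pair W_def nrm_def norm_mult power_mult_distrib algebra_simps)
  also have "\<dots> \<le> (rho n)\<^sup>2 * nrm f n"
    using w_le_rho[of n] by (intro mult_right_mono) (auto simp: abs_le_square_iff[symmetric] power2_abs)
  finally show ?thesis by (simp add: PX_def)
qed

lemma Dlam_l2:
  assumes "f \<in> DomX"
  shows "Dlam d c lam f \<in> l2"
proof -
  have s: "PX f summable_on UNIV" using assms by (simp add: DomX_def)
  have dz: "nrm (Dz f) summable_on UNIV" using Dz_bound(1)[OF assms] by (simp add: l2_iff)
  show ?thesis unfolding l2_iff
  proof (rule real_dom_summable[where g = "\<lambda>n. 2 * nrm (Dz f) n + 2 * PX f n"])
    show "(\<lambda>n. 2 * nrm (Dz f) n + 2 * PX f n) summable_on UNIV"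
      by (intro summable_on_add summable_on_cmult_right dz s)
    fix n
    show "0 \<le> nrm (Dlam d c lam f) n" by simp
    show "nrm (Dlam d c lam f) n \<le> 2 * nrm (Dz f) n + 2 * PX f n"
      using norm_add_sq[of "Dz f n" "(W n * fst (f n), - (W n * snd (f n)))"] norm_W_part[of n f]
      unfolding nrm_norm Dlam_split by linarith
  qed
qed

lemma DomX_Dom: "f \<in> DomX \<Longrightarrow> f \<in> Dlam_dom d c lam"
  by (simp add: Dlam_dom_def DomX_l2 Dlam_l2)

lemma Dz_sub: "Dz (vsub f g) n = Dz f n - Dz g n"
  using dpos[of n] dpos[of "n+1"]
  by (simp add: Dz_def grad_def grad_adj_def vsub_def prod_eq_iff field_simps)

lemma Dlam_sub: "Dlam d c lam (vsub f g) n = Dlam d c lam f n - Dlam d c lam g n"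
  by (simp add: Dlam_split Dz_sub vsub_eq algebra_simps)

lemma PX_sub: "PX (vsub f g) n \<le> 2 * PX f n + 2 * PX g n"
proof -
  have "nrm (vsub f g) n \<le> 2 * nrm f n + 2 * nrm g n"
    unfolding nrm_norm vsub_eq by (rule norm_diff_sq)
  hence "(rho n)\<^sup>2 * nrm (vsub f g) n \<le> (rho n)\<^sup>2 * (2 * nrm f n + 2 * nrm g n)"
    by (intro mult_left_mono) auto
  thus ?thesis by (simp add: PX_def algebra_simps)
qed

lemma DomX_sub: "f \<in> DomX \<Longrightarrow> g \<in> DomX \<Longrightarrow> vsub f g \<in> DomX"
  unfolding DomX_def
  by (auto intro!: real_dom_summable[where g = "\<lambda>n. 2 * PX f n + 2 * PX g n"]
      summable_on_add summable_on_cmult_right PX_sub)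

definition Mul :: "real \<Rightarrow> vec \<Rightarrow> vec" where
  "Mul s \<phi> = (\<lambda>n. (fst (\<phi> n) / (W n - \<i> * complex_of_real s), snd (\<phi> n) / (- W n - \<i> * complex_of_real s)))"

lemma cm_sq1: "s\<^sup>2 = mu\<^sup>2 \<Longrightarrow> (cmod (W n - \<i> * complex_of_real s))\<^sup>2 = (rho n)\<^sup>2"
  by (simp add: cmod_power2 W_def rho_sq)

lemma cm_sq2: "s\<^sup>2 = mu\<^sup>2 \<Longrightarrow> (cmod (- W n - \<i> * complex_of_real s))\<^sup>2 = (rho n)\<^sup>2"
  by (simp add: cmod_power2 W_def rho_sq)

lemma Mul_nz1: "s\<^sup>2 = mu\<^sup>2 \<Longrightarrow> W n - \<i> * complex_of_real s \<noteq> 0"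
  using cm_sq1[of s n] rho_pos[of n] by auto

lemma Mul_nz2: "s\<^sup>2 = mu\<^sup>2 \<Longrightarrow> - W n - \<i> * complex_of_real s \<noteq> 0"
  using cm_sq2[of s n] rho_pos[of n] by auto

lemma PX_Mul: "s\<^sup>2 = mu\<^sup>2 \<Longrightarrow> PX (Mul s \<phi>) n = nrm \<phi> n"
  using cm_sq1[of s n] cm_sq2[of s n] rho_pos[of n]
  by (simp add: PX_def nrm_def Mul_def norm_divide power_divide field_simps)

lemma Mul_eq1: "s\<^sup>2 = mu\<^sup>2 \<Longrightarrow> (W n - \<i> * complex_of_real s) * fst (Mul s \<phi> n) = fst (\<phi> n)"
  using Mul_nz1[of s n] by (simp add: Mul_def)

lemma Mul_eq2: "s\<^sup>2 = mu\<^sup>2 \<Longrightarrow> (- W n - \<i> * complex_of_real s) * snd (Mul s \<phi> n) = snd (\<phi> n)"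
  using Mul_nz2[of s n] by (simp add: Mul_def)

lemma Mul_sub: "vsub (Mul s a) (Mul s b) = Mul s (vsub a b)"
  by (simp add: Mul_def vsub_def diff_divide_distrib)


fun itr :: "real \<Rightarrow> vec \<Rightarrow> nat \<Rightarrow> vec" where
  "itr s u 0 = (\<lambda>n. (0, 0))"
| "itr s u (Suc k) = Mul s (vsub u (Dz (itr s u k)))"

lemma itr_bound:
  assumes s: "s\<^sup>2 = mu\<^sup>2" and u: "u \<in> l2"
  shows "itr s u k \<in> DomX \<and> (\<Sum>\<^sub>\<infinity>n. PX (itr s u k) n) \<le> 4 * QN u"
proof (induction k)
  case 0
  have "PX (itr s u 0) = (\<lambda>n. 0)" by (simp add: PX_def nrm_def fun_eq_iff)
  thus ?case using QN_nonneg[of u] by (simp add: DomX_def)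
next
  case (Suc k)
  let ?g = "itr s u k"
  have gX: "?g \<in> DomX" and gb: "(\<Sum>\<^sub>\<infinity>n. PX ?g n) \<le> 4 * QN u" using Suc by auto
  have su: "nrm u summable_on UNIV" using u by (simp add: l2_iff)
  have sd: "nrm (Dz ?g) summable_on UNIV" using Dz_bound(1)[OF gX] by (simp add: l2_iff)
  have pe: "PX (itr s u (Suc k)) n = nrm (vsub u (Dz ?g)) n" for n
    using PX_Mul[OF s] by simp
  have pl: "PX (itr s u (Suc k)) n \<le> 2 * nrm u n + 2 * nrm (Dz ?g) n" for n
    unfolding pe nrm_norm vsub_eq by (rule norm_diff_sq)
  have ss: "(\<lambda>n. 2 * nrm u n + 2 * nrm (Dz ?g) n) summable_on UNIV"
    by (intro summable_on_add summable_on_cmult_right su sd)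
  have sX: "PX (itr s u (Suc k)) summable_on UNIV"
    by (rule real_dom_summable[OF ss]) (simp, rule pl)
  have "(\<Sum>\<^sub>\<infinity>n. PX (itr s u (Suc k)) n) \<le> (\<Sum>\<^sub>\<infinity>n. 2 * nrm u n + 2 * nrm (Dz ?g) n)"
    by (rule infsum_mono[OF sX ss]) (rule pl)
  also have "\<dots> = 2 * QN u + 2 * QN (Dz ?g)"
    unfolding QN_def by (simp add: infsum_add infsum_cmult_right su sd summable_on_cmult_right)
  also have "\<dots> \<le> 4 * QN u" using Dz_bound(2)[OF gX] gb QN_nonneg[of u] by linarith
  finally show ?case using sX by (simp add: DomX_def)
qed

definition Dd :: "real \<Rightarrow> vec \<Rightarrow> nat \<Rightarrow> vec" where
  "Dd s u k = vsub (itr s u (Suc k)) (itr s u k)"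

lemma Dd_X:
  assumes s: "s\<^sup>2 = mu\<^sup>2" and u: "u \<in> l2"
  shows "Dd s u k \<in> DomX"
proof -
  have "itr s u (Suc k) \<in> DomX" "itr s u k \<in> DomX" using itr_bound[OF s u] by blast+
  thus ?thesis unfolding Dd_def by (rule DomX_sub)
qed

lemma Dd_step:
  assumes s: "s\<^sup>2 = mu\<^sup>2"
  shows "PX (Dd s u (Suc k)) n = nrm (Dz (Dd s u k)) n"
proof -
  have "Dd s u (Suc k) = Mul s (vsub (vsub u (Dz (itr s u (Suc k)))) (vsub u (Dz (itr s u k))))"
    by (simp add: Dd_def Mul_sub)
  hence "PX (Dd s u (Suc k)) n = nrm (vsub (vsub u (Dz (itr s u (Suc k)))) (vsub u (Dz (itr s u k)))) n"
    using PX_Mul[OF s] by simp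
  also have "\<dots> = nrm (Dz (Dd s u k)) n"
    unfolding nrm_norm vsub_eq Dd_def Dz_sub by (simp add: norm_minus_commute)
  finally show ?thesis .
qed

lemma Dd_decay:
  assumes s: "s\<^sup>2 = mu\<^sup>2" and u: "u \<in> l2"
  shows "(\<Sum>\<^sub>\<infinity>n. PX (Dd s u k) n) \<le> (3/32)^k * (\<Sum>\<^sub>\<infinity>n. PX (Dd s u 0) n)"
proof (induction k)
  case 0 then show ?case by simp
next
  case (Suc k)
  have "(\<Sum>\<^sub>\<infinity>n. PX (Dd s u (Suc k)) n) = QN (Dz (Dd s u k))"
    unfolding QN_def by (simp add: Dd_step[OF s])
  also have "\<dots> \<le> 3 / 32 * (\<Sum>\<^sub>\<infinity>n. PX (Dd s u k) n)" by (rule Dz_bound(2)[OF Dd_X[OF s u]])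
  also have "\<dots> \<le> 3 / 32 * ((3/32)^k * (\<Sum>\<^sub>\<infinity>n. PX (Dd s u 0) n))"
    using Suc by simp
  finally show ?case by simp
qed

lemma Dd_lim:
  assumes s: "s\<^sup>2 = mu\<^sup>2" and u: "u \<in> l2"
  shows "(\<lambda>k. Dd s u k n) \<longlonglongrightarrow> 0"
proof (rule Lim_null_comparison)
  define C where "C = (\<Sum>\<^sub>\<infinity>n. PX (Dd s u 0) n)"
  have mu2: "mu\<^sup>2 > 0" using mu_props(1) by simp
  show "\<forall>\<^sub>F k in sequentially. norm (Dd s u k n) \<le> sqrt ((3/32)^k * (C / mu\<^sup>2))"
  proof (intro always_eventually allI)
    fix k
    have "mu\<^sup>2 * nrm (Dd s u k) n \<le> PX (Dd s u k) n" by (rule nrm_le_PX)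
    also have "\<dots> \<le> (\<Sum>\<^sub>\<infinity>n. PX (Dd s u k) n)"
      by (rule single_le_infsum) (use Dd_X[OF s u, of k] in \<open>auto simp: DomX_def\<close>)
    also have "\<dots> \<le> (3/32)^k * C" unfolding C_def by (rule Dd_decay[OF s u])
    finally have "nrm (Dd s u k) n \<le> (3/32)^k * (C / mu\<^sup>2)"
      using mu2 by (simp add: le_divide_eq mult.commute)
    thus "norm (Dd s u k n) \<le> sqrt ((3/32)^k * (C / mu\<^sup>2))"
      unfolding nrm_norm by (simp add: real_le_rsqrt)
  qed
  have "(\<lambda>k. sqrt ((3/32::real)^k * (C / mu\<^sup>2))) \<longlonglongrightarrow> sqrt (0 * (C / mu\<^sup>2))"
    by (intro tendsto_intros) simp
  thus "(\<lambda>k. sqrt ((3/32::real)^k * (C / mu\<^sup>2))) \<longlonglongrightarrow> 0" by simp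
qed

lemma Dz_tendsto:
  assumes "\<And>m. (\<lambda>k. F k m) \<longlonglongrightarrow> f m"
  shows "(\<lambda>k. Dz (F k) n) \<longlonglongrightarrow> Dz f n"
  unfolding Dz_def grad_def grad_adj_def
  using dpos[of n] dpos[of "n+1"] by (auto intro!: tendsto_intros assms)

lemma RES:
  assumes s: "s\<^sup>2 = mu\<^sup>2" and u: "u \<in> l2"
  shows "\<exists>g\<in>DomX. vsub (Dlam d c lam g) (vscale (\<i> * complex_of_real s) g) = u \<and> (\<Sum>\<^sub>\<infinity>n. PX g n) \<le> 4 * QN u"
proof -
  define G where "G = itr s u"
  have GX: "\<And>k. G k \<in> DomX" and Gb: "\<And>k. (\<Sum>\<^sub>\<infinity>n. PX (G k) n) \<le> 4 * QN u"
    using itr_bound[OF s u] by (auto simp: G_def)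
  have mu2: "mu\<^sup>2 > 0" using mu_props(1) by simp
  have nb: "norm (G k n) \<le> sqrt (4 * QN u / mu\<^sup>2)" for k n
  proof -
    have "mu\<^sup>2 * nrm (G k) n \<le> PX (G k) n" by (rule nrm_le_PX)
    also have "\<dots> \<le> (\<Sum>\<^sub>\<infinity>n. PX (G k) n)"
      by (rule single_le_infsum) (use GX[of k] in \<open>auto simp: DomX_def\<close>)
    also have "\<dots> \<le> 4 * QN u" by (rule Gb)
    finally have "nrm (G k) n \<le> 4 * QN u / mu\<^sup>2" using mu2 by (simp add: le_divide_eq mult.commute)
    thus ?thesis unfolding nrm_norm by (simp add: real_le_rsqrt)
  qed
  obtain r g where r: "strict_mono r" and conv: "\<And>n. (\<lambda>k. G (r k) n) \<longlonglongrightarrow> g n"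
    using extract_sub[of G "\<lambda>n. sqrt (4 * QN u / mu\<^sup>2)", OF nb] by blast
  have fin: "sum (PX g) F \<le> 4 * QN u" if "finite F" for F
  proof (rule LIMSEQ_le_const2)
    show "(\<lambda>k. sum (PX (G (r k))) F) \<longlonglongrightarrow> sum (PX g) F"
      unfolding PX_def nrm_norm by (intro tendsto_intros conv)
    show "\<exists>N. \<forall>k\<ge>N. sum (PX (G (r k))) F \<le> 4 * QN u"
    proof (intro exI allI impI)
      fix k
      have "sum (PX (G (r k))) F \<le> (\<Sum>\<^sub>\<infinity>n. PX (G (r k)) n)"
        by (rule finite_sum_le_infsum) (use GX[of "r k"] that in \<open>auto simp: DomX_def\<close>)
      thus "sum (PX (G (r k))) F \<le> 4 * QN u" using Gb[of "r k"] by linarith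
    qed
  qed
  have gs: "PX g summable_on UNIV"
    by (rule nonneg_bdd_above_summable_on) (use fin in \<open>auto intro!: bdd_aboveI\<close>)
  have gb: "(\<Sum>\<^sub>\<infinity>n. PX g n) \<le> 4 * QN u"
    by (rule infsum_le_finite_sums[OF gs]) (rule fin)
  have dl: "(\<lambda>k. Dd s u k n) \<longlonglongrightarrow> 0" for n by (rule Dd_lim[OF s u])
  have conv1: "(\<lambda>k. G (Suc (r k)) n) \<longlonglongrightarrow> g n" for n
  proof -
    have "(\<lambda>k. G (r k) n + Dd s u (r k) n) \<longlonglongrightarrow> g n + 0"
      using LIMSEQ_subseq_LIMSEQ[OF dl r] conv by (intro tendsto_add) (auto simp: o_def)
    moreover have "G (r k) n + Dd s u (r k) n = G (Suc (r k)) n" for k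
      by (simp add: Dd_def G_def vsub_eq)
    ultimately show ?thesis by simp
  qed
  have dzc: "(\<lambda>k. Dz (G (r k)) n) \<longlonglongrightarrow> Dz g n" for n by (rule Dz_tendsto) (rule conv)
  have eq1: "(W n - \<i> * complex_of_real s) * fst (g n) = fst (u n) - fst (Dz g n)" for n
  proof (rule LIMSEQ_unique)
    show "(\<lambda>k. (W n - \<i> * complex_of_real s) * fst (G (Suc (r k)) n)) \<longlonglongrightarrow> (W n - \<i> * complex_of_real s) * fst (g n)"
      by (intro tendsto_intros conv1)
    have "(W n - \<i> * complex_of_real s) * fst (G (Suc (r k)) n) = fst (u n) - fst (Dz (G (r k)) n)" for k
      using Mul_eq1[OF s] by (simp add: G_def vsub_eq)
    moreover have "(\<lambda>k. fst (u n) - fst (Dz (G (r k)) n)) \<longlonglongrightarrow> fst (u n) - fst (Dz g n)"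
      by (intro tendsto_intros dzc)
    ultimately show "(\<lambda>k. (W n - \<i> * complex_of_real s) * fst (G (Suc (r k)) n)) \<longlonglongrightarrow> fst (u n) - fst (Dz g n)"
      by simp
  qed
  have eq2: "(- W n - \<i> * complex_of_real s) * snd (g n) = snd (u n) - snd (Dz g n)" for n
  proof (rule LIMSEQ_unique)
    show "(\<lambda>k. (- W n - \<i> * complex_of_real s) * snd (G (Suc (r k)) n)) \<longlonglongrightarrow> (- W n - \<i> * complex_of_real s) * snd (g n)"
      by (intro tendsto_intros conv1)
    have "(- W n - \<i> * complex_of_real s) * snd (G (Suc (r k)) n) = snd (u n) - snd (Dz (G (r k)) n)" for k
      using Mul_eq2[OF s] by (simp add: G_def vsub_eq)
    moreover have "(\<lambda>k. snd (u n) - snd (Dz (G (r k)) n)) \<longlonglongrightarrow> snd (u n) - snd (Dz g n)"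
      by (intro tendsto_intros dzc)
    ultimately show "(\<lambda>k. (- W n - \<i> * complex_of_real s) * snd (G (Suc (r k)) n)) \<longlonglongrightarrow> snd (u n) - snd (Dz g n)"
      by simp
  qed
  have "vsub (Dlam d c lam g) (vscale (\<i> * complex_of_real s) g) = u"
  proof (rule ext)
    fix n
    have u1: "fst (u n) = fst (Dz g n) + (W n - \<i> * complex_of_real s) * fst (g n)"
      by (simp add: eq1)
    have u2: "snd (u n) = snd (Dz g n) + (- W n - \<i> * complex_of_real s) * snd (g n)"
      by (simp add: eq2)
    show "vsub (Dlam d c lam g) (vscale (\<i> * complex_of_real s) g) n = u n"
      by (simp add: vsub_def vscale_def Dlam_eq prod_eq_iff u1 u2 algebra_simps)
  qed
  thus ?thesis using gs gb by (auto simp: DomX_def)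
qed


lemma bnd_div:
  fixes x r dl :: real
  assumes "0 \<le> x" "8 / dl \<le> r" "0 < dl"
  shows "x / dl \<le> r * x"
proof -
  have "x / dl \<le> r * x / 8" by (rule div_le_helper[OF assms])
  moreover have "0 \<le> r * x" using assms by (metis order_trans divide_pos_pos less_imp_le zero_less_numeral mult_nonneg_nonneg)
  ultimately show ?thesis by linarith
qed

lemma sqP1: "(rho n * cmod (fst (f n)))\<^sup>2 \<le> PX f n"
  unfolding PX_def nrm_def by (simp add: power_mult_distrib algebra_simps)

lemma sqP2: "(rho n * cmod (snd (f n)))\<^sup>2 \<le> PX f n"
  unfolding PX_def nrm_def by (simp add: power_mult_distrib algebra_simps)

lemma sqN1: "(cmod (fst (f n)))\<^sup>2 \<le> nrm f n"
  unfolding nrm_def by simp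

lemma sqN2: "(cmod (snd (f n)))\<^sup>2 \<le> nrm f n"
  unfolding nrm_def by simp

lemma inf3:
  fixes B T U :: "int \<Rightarrow> complex"
  assumes "B summable_on UNIV" "T summable_on UNIV" "U summable_on UNIV"
  shows "(\<Sum>\<^sub>\<infinity>n. B n + a * T n + b * U n) = infsum B UNIV + a * infsum T UNIV + b * infsum U UNIV"
proof -
  have 1: "(\<Sum>\<^sub>\<infinity>n. B n + a * T n + b * U n) = (\<Sum>\<^sub>\<infinity>n. B n + a * T n) + (\<Sum>\<^sub>\<infinity>n. b * U n)"
    by (rule infsum_add) (intro summable_on_add summable_on_cmult_right assms)+
  have 2: "(\<Sum>\<^sub>\<infinity>n. B n + a * T n) = infsum B UNIV + (\<Sum>\<^sub>\<infinity>n. a * T n)"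
    by (rule infsum_add) (intro summable_on_add summable_on_cmult_right assms)+
  show ?thesis using 1 2 infsum_cmult_right[of a T UNIV] infsum_cmult_right[of b U UNIV] assms by simp
qed

lemma SYM:
  assumes ph: "\<phi> \<in> DomX" and h: "h \<in> l2"
  shows "l2inner (Dlam d c lam \<phi>) h = l2inner \<phi> (Dlam d c lam h)"
proof -
  define D where "D n = complex_of_real (delta d n)" for n
  define t1 where "t1 n = cnj (snd (\<phi> n)) * fst (h n) / D n" for n
  define t2 where "t2 n = W n * cnj (fst (\<phi> n)) * fst (h n)" for n
  define t3 where "t3 n = cnj (fst (\<phi> n)) * snd (h n) / D n" for n
  define t4 where "t4 n = W n * cnj (snd (\<phi> n)) * snd (h n)" for n
  define T1 where "T1 n = cnj (snd (\<phi> (n - 1))) * fst (h n) / D n" for n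
  define T2 where "T2 n = cnj (fst (\<phi> n)) * snd (h (n - 1)) / D n" for n
  have sP: "PX \<phi> summable_on UNIV" using ph by (simp add: DomX_def)
  have sPm: "(\<lambda>n. PX \<phi> (n - 1)) summable_on UNIV" using sP shift_summable_m by blast
  have sN: "nrm h summable_on UNIV" using h by (simp add: l2_iff)
  have sNm: "(\<lambda>n. nrm h (n - 1)) summable_on UNIV" using sN shift_summable_m by blast
  have nD: "norm (D n) = delta d n" for n using dpos[of n] by (simp add: D_def)
  have st1: "t1 summable_on UNIV"
  proof (rule summ_prod[OF sP sN])
    fix n
    show "norm (t1 n) \<le> (rho n * cmod (snd (\<phi> n))) * cmod (fst (h n))"
      unfolding t1_def norm_divide norm_mult nD complex_mod_cnj
      using bnd_div[OF _ ad1 dpos, of "cmod (snd (\<phi> n)) * cmod (fst (h n))" n] by (simp add: mult_ac)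
  qed (auto intro: sqP2 sqN1 mult_nonneg_nonneg less_imp_le[OF rho_pos])
  have st3: "t3 summable_on UNIV"
  proof (rule summ_prod[OF sP sN])
    fix n
    show "norm (t3 n) \<le> (rho n * cmod (fst (\<phi> n))) * cmod (snd (h n))"
      unfolding t3_def norm_divide norm_mult nD complex_mod_cnj
      using bnd_div[OF _ ad1 dpos, of "cmod (fst (\<phi> n)) * cmod (snd (h n))" n] by (simp add: mult_ac)
  qed (auto intro: sqP1 sqN2 mult_nonneg_nonneg less_imp_le[OF rho_pos])
  have st2: "t2 summable_on UNIV"
  proof (rule summ_prod[OF sP sN])
    fix n
    show "norm (t2 n) \<le> (rho n * cmod (fst (\<phi> n))) * cmod (fst (h n))"
      unfolding t2_def norm_mult complex_mod_cnj W_def norm_of_real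
      using w_le_rho[of n] by (simp add: mult_right_mono mult.assoc)
  qed (auto intro: sqP1 sqN1 mult_nonneg_nonneg less_imp_le[OF rho_pos])
  have st4: "t4 summable_on UNIV"
  proof (rule summ_prod[OF sP sN])
    fix n
    show "norm (t4 n) \<le> (rho n * cmod (snd (\<phi> n))) * cmod (snd (h n))"
      unfolding t4_def norm_mult complex_mod_cnj W_def norm_of_real
      using w_le_rho[of n] by (simp add: mult_right_mono mult.assoc)
  qed (auto intro: sqP2 sqN2 mult_nonneg_nonneg less_imp_le[OF rho_pos])
  have sT1: "T1 summable_on UNIV"
  proof (rule summ_prod[OF sPm sN])
    fix n
    have a: "8 / delta d (n - 1 + 1) \<le> rho (n - 1)" by (rule ad2)
    show "norm (T1 n) \<le> (rho (n - 1) * cmod (snd (\<phi> (n - 1)))) * cmod (fst (h n))"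
      unfolding T1_def norm_divide norm_mult nD complex_mod_cnj
      using bnd_div[OF _ a, of "cmod (snd (\<phi> (n - 1))) * cmod (fst (h n))"] dpos[of n] by (simp add: mult_ac)
  qed (auto intro: sqP2 sqN1 mult_nonneg_nonneg less_imp_le[OF rho_pos])
  have sT2: "T2 summable_on UNIV"
  proof (rule summ_prod[OF sP sNm])
    fix n
    show "norm (T2 n) \<le> (rho n * cmod (fst (\<phi> n))) * cmod (snd (h (n - 1)))"
      unfolding T2_def norm_divide norm_mult nD complex_mod_cnj
      using bnd_div[OF _ ad1 dpos, of "cmod (fst (\<phi> n)) * cmod (snd (h (n - 1)))" n] by (simp add: mult_ac)
  qed (auto intro: sqP1 sqN2 mult_nonneg_nonneg less_imp_le[OF rho_pos])
  have sT1': "(\<lambda>n. T1 (n + 1)) summable_on UNIV" using sT1 shift_summable by blast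
  have sT2': "(\<lambda>n. T2 (n + 1)) summable_on UNIV" using sT2 shift_summable by blast
  define B where "B n = \<i> * t1 n + t2 n + (- \<i>) * t3 n + (- 1) * t4 n" for n
  have sB: "B summable_on UNIV"
    unfolding B_def
    by (intro summable_on_add summable_on_cmult_right st1 st2 st3 st4)
  have L: "cnj (fst (Dlam d c lam \<phi> n)) * fst (h n) + cnj (snd (Dlam d c lam \<phi> n)) * snd (h n)
      = B n + (- \<i>) * T1 n + \<i> * T2 (n + 1)" for n
    using dpos[of n] dpos[of "n+1"]
    by (simp add: B_def t1_def t2_def t3_def t4_def T1_def T2_def D_def Dlam_eq Dz_def grad_def grad_adj_def W_def field_simps)
  have R: "cnj (fst (\<phi> n)) * fst (Dlam d c lam h n) + cnj (snd (\<phi> n)) * snd (Dlam d c lam h n)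
      = B n + \<i> * T2 n + (- \<i>) * T1 (n + 1)" for n
    using dpos[of n] dpos[of "n+1"]
    by (simp add: B_def t1_def t2_def t3_def t4_def T1_def T2_def D_def Dlam_eq Dz_def grad_def grad_adj_def W_def field_simps)
  have "l2inner (Dlam d c lam \<phi>) h = (\<Sum>\<^sub>\<infinity>n. B n + (- \<i>) * T1 n + \<i> * T2 (n + 1))"
    unfolding l2inner_def L ..
  also have "\<dots> = (\<Sum>\<^sub>\<infinity>n. B n) + (- \<i>) * (\<Sum>\<^sub>\<infinity>n. T1 n) + \<i> * (\<Sum>\<^sub>\<infinity>n. T2 (n + 1))"
    by (rule inf3[OF sB sT1 sT2'])
  also have "\<dots> = (\<Sum>\<^sub>\<infinity>n. B n) + \<i> * (\<Sum>\<^sub>\<infinity>n. T2 n) + (- \<i>) * (\<Sum>\<^sub>\<infinity>n. T1 (n + 1))"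
    by (simp add: shift_infsum)
  also have "\<dots> = (\<Sum>\<^sub>\<infinity>n. B n + \<i> * T2 n + (- \<i>) * T1 (n + 1))"
    by (rule inf3[OF sB sT2 sT1', symmetric])
  also have "\<dots> = l2inner \<phi> (Dlam d c lam h)"
    unfolding l2inner_def R ..
  finally show ?thesis .
qed


lemma infsum_fin_supp:
  fixes a :: "int \<Rightarrow> 'a::{comm_monoid_add,t2_space}"
  assumes "finite F"
  shows "(\<Sum>\<^sub>\<infinity>n. if n \<in> F then a n else 0) = sum a F"
proof -
  have "(\<Sum>\<^sub>\<infinity>n. if n \<in> F then a n else 0) = infsum a F"
    by (rule infsum_cong_neutral) auto
  thus ?thesis using assms by simp
qed

lemma summable_fin_supp:
  fixes a :: "int \<Rightarrow> 'a::{comm_monoid_add,topological_space}"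
  assumes "finite F" "\<And>n. n \<notin> F \<Longrightarrow> a n = 0"
  shows "a summable_on UNIV"
proof -
  have "a summable_on UNIV \<longleftrightarrow> a summable_on F"
    by (rule summable_on_cong_neutral) (use assms in auto)
  thus ?thesis using assms by simp
qed

lemma DomX_fin:
  assumes "finite F" "\<And>n. n \<notin> F \<Longrightarrow> f n = (0, 0)"
  shows "f \<in> DomX"
  unfolding DomX_def mem_Collect_eq
  by (rule summable_fin_supp[OF assms(1)]) (simp add: assms(2) PX_def nrm_def)

lemma l2_vsub:
  assumes "f \<in> l2" "g \<in> l2" shows "vsub f g \<in> l2"
proof -
  have sf: "nrm f summable_on UNIV" and sg: "nrm g summable_on UNIV" using assms by (auto simp: l2_iff)
  show ?thesis unfolding l2_iff
    by (rule real_dom_summable[where g = "\<lambda>n. 2 * nrm f n + 2 * nrm g n"])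
       (intro summable_on_add summable_on_cmult_right sf sg, simp, simp add: nrm_norm vsub_eq norm_diff_sq)
qed

lemma l2_vscale: "f \<in> l2 \<Longrightarrow> vscale z f \<in> l2"
proof -
  assume "f \<in> l2"
  hence s: "nrm f summable_on UNIV" by (simp add: l2_iff)
  have "nrm (vscale z f) = (\<lambda>n. (cmod z)\<^sup>2 * nrm f n)"
    by (simp add: fun_eq_iff nrm_def vscale_def norm_mult power_mult_distrib algebra_simps)
  thus ?thesis using summable_on_cmult_right[OF s] by (simp add: l2_iff)
qed

lemma inner_summable:
  assumes "f \<in> l2" "g \<in> l2"
  shows "(\<lambda>n. cnj (fst (f n)) * fst (g n) + cnj (snd (f n)) * snd (g n)) summable_on UNIV"
proof -
  have sf: "nrm f summable_on UNIV" and sg: "nrm g summable_on UNIV" using assms by (auto simp: l2_iff)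
  have a: "(\<lambda>n. cnj (fst (f n)) * fst (g n)) summable_on UNIV"
    by (rule summ_prod[OF sf sg, where X = "\<lambda>n. cmod (fst (f n))" and Y = "\<lambda>n. cmod (fst (g n))"])
       (auto simp: norm_mult sqN1)
  have b: "(\<lambda>n. cnj (snd (f n)) * snd (g n)) summable_on UNIV"
    by (rule summ_prod[OF sf sg, where X = "\<lambda>n. cmod (snd (f n))" and Y = "\<lambda>n. cmod (snd (g n))"])
       (auto simp: norm_mult sqN2)
  show ?thesis by (rule summable_on_add[OF a b])
qed

lemma cnj_self: "cnj z * z = complex_of_real ((cmod z)\<^sup>2)"
  by (metis complex_norm_square mult.commute)

lemma inner_self:
  assumes "h \<in> l2"
  shows "l2inner h h = complex_of_real (QN h)"
proof -
  have s: "nrm h summable_on UNIV" using assms by (simp add: l2_iff)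
  have "l2inner h h = (\<Sum>\<^sub>\<infinity>n. complex_of_real (nrm h n))"
    unfolding l2inner_def nrm_def
    by (rule infsum_cong) (simp only: of_real_add cnj_self)
  also have "\<dots> = complex_of_real (QN h)"
    unfolding QN_def by (rule infsumI, rule has_sum_of_real, rule has_sum_infsum[OF s])
  finally show ?thesis .
qed

lemma KER:
  assumes s: "s\<^sup>2 = mu\<^sup>2" and h: "h \<in> l2"
    and k: "\<And>n. vsub (Dlam d c lam h) (vscale (\<i> * complex_of_real s) h) n = (0, 0)"
  shows "h = (\<lambda>n. (0, 0))"
proof -
  have s': "(-s)\<^sup>2 = mu\<^sup>2" using s by simp
  obtain \<phi> where ph: "\<phi> \<in> DomX" and eq: "vsub (Dlam d c lam \<phi>) (vscale (\<i> * complex_of_real (-s)) \<phi>) = h"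
    using RES[OF s' h] by blast
  have Ah: "Dlam d c lam h n = ((\<i> * complex_of_real s) * fst (h n), (\<i> * complex_of_real s) * snd (h n))" for n
    using k[of n] by (simp add: vsub_def vscale_def prod_eq_iff)
  have Aph: "Dlam d c lam \<phi> n = (fst (h n) - (\<i> * complex_of_real s) * fst (\<phi> n), snd (h n) - (\<i> * complex_of_real s) * snd (\<phi> n))" for n
    using fun_cong[OF eq, of n] by (auto simp: vsub_def vscale_def prod_eq_iff algebra_simps)
  have phl: "\<phi> \<in> l2" by (rule DomX_l2[OF ph])
  define X where "X n = cnj (fst (h n)) * fst (h n) + cnj (snd (h n)) * snd (h n)" for n
  define Y where "Y n = cnj (fst (\<phi> n)) * fst (h n) + cnj (snd (\<phi> n)) * snd (h n)" for n
  have sX: "X summable_on UNIV" unfolding X_def by (rule inner_summable[OF h h])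
  have sY: "Y summable_on UNIV" unfolding Y_def by (rule inner_summable[OF phl h])
  have "l2inner (Dlam d c lam \<phi>) h = (\<Sum>\<^sub>\<infinity>n. X n + (\<i> * complex_of_real s) * Y n)"
    unfolding l2inner_def by (rule infsum_cong) (simp add: Aph X_def Y_def algebra_simps)
  also have "\<dots> = infsum X UNIV + (\<i> * complex_of_real s) * infsum Y UNIV"
    using infsum_add[OF sX summable_on_cmult_right[OF sY, of "\<i> * complex_of_real s"]]
      infsum_cmult_right[of "\<i> * complex_of_real s" Y UNIV] sY by simp
  finally have L: "l2inner (Dlam d c lam \<phi>) h = infsum X UNIV + (\<i> * complex_of_real s) * infsum Y UNIV" .
  have "l2inner \<phi> (Dlam d c lam h) = (\<Sum>\<^sub>\<infinity>n. (\<i> * complex_of_real s) * Y n)"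
    unfolding l2inner_def by (rule infsum_cong) (simp add: Ah Y_def algebra_simps)
  also have "\<dots> = (\<i> * complex_of_real s) * infsum Y UNIV"
    using infsum_cmult_right[of "\<i> * complex_of_real s" Y UNIV] sY by simp
  finally have R: "l2inner \<phi> (Dlam d c lam h) = (\<i> * complex_of_real s) * infsum Y UNIV" .
  have "infsum X UNIV = 0" using SYM[OF ph h] L R by simp
  moreover have "infsum X UNIV = complex_of_real (QN h)"
    using inner_self[OF h] unfolding l2inner_def X_def by simp
  ultimately have q0: "QN h \<le> 0" by simp
  have "nrm h n = 0" for n
    by (rule nonneg_infsum_le_0D[where A = UNIV]) (use q0 h in \<open>auto simp: QN_def l2_iff\<close>)
  hence "h n = (0, 0)" for n by (simp add: nrm_def prod_eq_iff)
  thus ?thesis by auto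
qed

lemma UNIQ:
  assumes s: "s\<^sup>2 = mu\<^sup>2" and f: "f \<in> l2" and g: "g \<in> l2"
    and e: "vsub (Dlam d c lam f) (vscale (\<i> * complex_of_real s) f) = vsub (Dlam d c lam g) (vscale (\<i> * complex_of_real s) g)"
  shows "f = g"
proof -
  have k: "vsub (Dlam d c lam (vsub f g)) (vscale (\<i> * complex_of_real s) (vsub f g)) n = (0, 0)" for n
  proof -
    have "vsub (Dlam d c lam (vsub f g)) (vscale (\<i> * complex_of_real s) (vsub f g)) n
        = vsub (Dlam d c lam f) (vscale (\<i> * complex_of_real s) f) n - vsub (Dlam d c lam g) (vscale (\<i> * complex_of_real s) g) n"
      unfolding vsub_eq Dlam_sub by (simp add: vscale_def vsub_def prod_eq_iff algebra_simps)
    thus ?thesis using e by (simp add: zero_prod_def)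
  qed
  have "vsub f g = (\<lambda>n. (0, 0))" by (rule KER[OF s l2_vsub[OF f g] k])
  hence "vsub f g n = (0, 0)" for n by simp
  hence "f n - g n = 0" for n unfolding vsub_eq by (simp add: zero_prod_def)
  hence "f n = g n" for n by (metis eq_iff_diff_eq_0)
  thus ?thesis by auto
qed

lemma Dom_eq: "Dlam_dom d c lam = DomX"
proof
  show "DomX \<subseteq> Dlam_dom d c lam" using DomX_Dom by blast
  show "Dlam_dom d c lam \<subseteq> DomX"
  proof
    fix f assume "f \<in> Dlam_dom d c lam"
    hence f: "f \<in> l2" and Af: "Dlam d c lam f \<in> l2" by (auto simp: Dlam_dom_def)
    have s: "mu\<^sup>2 = mu\<^sup>2" ..
    define u where "u = vsub (Dlam d c lam f) (vscale (\<i> * complex_of_real mu) f)"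
    have u: "u \<in> l2" unfolding u_def by (intro l2_vsub l2_vscale Af f)
    obtain g where g: "g \<in> DomX" and eg: "vsub (Dlam d c lam g) (vscale (\<i> * complex_of_real mu) g) = u"
      using RES[OF s u] by blast
    have "f = g" by (rule UNIQ[OF s f DomX_l2[OF g]]) (simp add: eg u_def)
    thus "f \<in> DomX" using g by simp
  qed
qed

lemma e1_inner: "l2inner (\<lambda>m. if m = n then (1, 0) else (0, 0)) X = fst (X n)"
proof -
  have "l2inner (\<lambda>m. if m = n then (1, 0) else (0, 0)) X = (\<Sum>\<^sub>\<infinity>m. if m \<in> {n} then fst (X m) else 0)"
    unfolding l2inner_def by (rule infsum_cong) simp
  thus ?thesis using infsum_fin_supp[of "{n}" "\<lambda>m. fst (X m)"] by simp
qed

lemma e2_inner: "l2inner (\<lambda>m. if m = n then (0, 1) else (0, 0)) X = snd (X n)"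
proof -
  have "l2inner (\<lambda>m. if m = n then (0, 1) else (0, 0)) X = (\<Sum>\<^sub>\<infinity>m. if m \<in> {n} then snd (X m) else 0)"
    unfolding l2inner_def by (rule infsum_cong) simp
  thus ?thesis using infsum_fin_supp[of "{n}" "\<lambda>m. snd (X m)"] by simp
qed


lemma dens:
  assumes g: "g \<in> l2" and e: "e > 0"
  shows "\<exists>f\<in>DomX. l2norm (vsub g f) < e"
proof -
  have s: "nrm g summable_on UNIV" using g by (simp add: l2_iff)
  have e2: "e\<^sup>2 / 2 > 0" using e by simp
  obtain F where F: "finite F" "dist (sum (nrm g) F) (QN g) \<le> e\<^sup>2 / 2"
    using infsum_finite_approximation[OF s e2] by (auto simp: QN_def)
  define t where "t n = (if n \<in> F then g n else (0, 0))" for n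
  have tX: "t \<in> DomX" by (rule DomX_fin[OF F(1)]) (simp add: t_def)
  have pw: "nrm (vsub g t) n = nrm g n + (-1) * (if n \<in> F then nrm g n else 0)" for n
    by (cases "n \<in> F") (simp_all add: t_def vsub_eq nrm_norm zero_prod_def[symmetric])
  have sF: "(\<lambda>n. if n \<in> F then nrm g n else 0) summable_on UNIV"
    by (rule summable_fin_supp[OF F(1)]) simp
  have "QN (vsub g t) = (\<Sum>\<^sub>\<infinity>n. nrm g n + (-1) * (if n \<in> F then nrm g n else 0))"
    unfolding QN_def pw ..
  also have "\<dots> = QN g + (-1) * (\<Sum>\<^sub>\<infinity>n. if n \<in> F then nrm g n else 0)"
    unfolding QN_def
    using infsum_add[OF s summable_on_cmult_right[OF sF, of "-1"]]
      infsum_cmult_right[of "-1" "\<lambda>n. if n \<in> F then nrm g n else 0" UNIV] sF by simp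
  also have "\<dots> = QN g - sum (nrm g) F" using infsum_fin_supp[OF F(1), of "nrm g"] by simp
  finally have "QN (vsub g t) \<le> e\<^sup>2 / 2" using F(2) unfolding dist_real_def by linarith
  hence "sqrt (QN (vsub g t)) \<le> sqrt (e\<^sup>2 / 2)" by (rule real_sqrt_le_mono)
  also have "\<dots> < sqrt (e\<^sup>2)" using e by (intro real_sqrt_less_mono) simp
  also have "\<dots> = e" using e by simp
  finally have "l2norm (vsub g t) < e" by (simp add: l2norm_QN)
  thus ?thesis using tX by blast
qed

lemma SA: "selfadjoint_op (Dlam_dom d c lam) (Dlam d c lam)"
  unfolding selfadjoint_op_def Dom_eq
proof (intro conjI ballI allI impI)
  show "DomX \<subseteq> l2" using DomX_l2 by blast
next
  fix f assume "f \<in> DomX" thus "Dlam d c lam f \<in> l2" by (rule Dlam_l2)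
next
  fix g :: vec and e :: real assume "g \<in> l2" "0 < e"
  thus "\<exists>f\<in>DomX. l2norm (vsub g f) < e" by (rule dens)
next
  fix f g assume "f \<in> DomX" "g \<in> DomX"
  thus "l2inner (Dlam d c lam f) g = l2inner f (Dlam d c lam g)"
    using SYM DomX_l2 by blast
next
  fix g assume g: "g \<in> l2"
  show "(\<exists>h\<in>l2. \<forall>f\<in>DomX. l2inner (Dlam d c lam f) g = l2inner f h) \<longleftrightarrow> g \<in> DomX"
  proof
    assume "g \<in> DomX"
    thus "\<exists>h\<in>l2. \<forall>f\<in>DomX. l2inner (Dlam d c lam f) g = l2inner f h"
      using Dlam_l2 SYM[OF _ g] by blast
  next
    assume "\<exists>h\<in>l2. \<forall>f\<in>DomX. l2inner (Dlam d c lam f) g = l2inner f h"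
    then obtain h where h: "h \<in> l2" and H: "\<And>f. f \<in> DomX \<Longrightarrow> l2inner (Dlam d c lam f) g = l2inner f h"
      by blast
    have "Dlam d c lam g n = h n" for n
    proof -
      define e1 where "e1 = (\<lambda>m. if m = n then (1::complex, 0::complex) else (0, 0))"
      define e2 where "e2 = (\<lambda>m. if m = n then (0::complex, 1::complex) else (0, 0))"
      have e1X: "e1 \<in> DomX" by (rule DomX_fin[of "{n}"]) (auto simp: e1_def)
      have e2X: "e2 \<in> DomX" by (rule DomX_fin[of "{n}"]) (auto simp: e2_def)
      have "fst (Dlam d c lam g n) = fst (h n)"
        using SYM[OF e1X g] H[OF e1X] e1_inner[of n] unfolding e1_def by simp
      moreover have "snd (Dlam d c lam g n) = snd (h n)"
        using SYM[OF e2X g] H[OF e2X] e2_inner[of n] unfolding e2_def by simp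
      ultimately show ?thesis by (simp add: prod_eq_iff)
    qed
    hence "Dlam d c lam g = h" by auto
    hence "g \<in> Dlam_dom d c lam" using g h by (simp add: Dlam_dom_def)
    thus "g \<in> DomX" using Dom_eq by simp
  qed
qed

lemma FATOU:
  assumes yX: "\<And>k. y k \<in> DomX" and yb: "\<And>k. (\<Sum>\<^sub>\<infinity>n. PX (y k) n) \<le> M"
    and conv: "\<And>n. (\<lambda>k. y (r k) n) \<longlonglongrightarrow> g n"
  shows "g \<in> DomX" "(\<Sum>\<^sub>\<infinity>n. PX g n) \<le> M"
proof -
  have fin: "sum (PX g) F \<le> M" if "finite F" for F
  proof (rule LIMSEQ_le_const2)
    show "(\<lambda>k. sum (PX (y (r k))) F) \<longlonglongrightarrow> sum (PX g) F"
      unfolding PX_def nrm_norm by (intro tendsto_intros conv)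
    show "\<exists>N. \<forall>k\<ge>N. sum (PX (y (r k))) F \<le> M"
    proof (intro exI allI impI)
      fix k
      have "sum (PX (y (r k))) F \<le> (\<Sum>\<^sub>\<infinity>n. PX (y (r k)) n)"
        by (rule finite_sum_le_infsum) (use yX[of "r k"] that in \<open>auto simp: DomX_def\<close>)
      thus "sum (PX (y (r k))) F \<le> M" using yb[of "r k"] by linarith
    qed
  qed
  have gs: "PX g summable_on UNIV"
    by (rule nonneg_bdd_above_summable_on) (use fin in \<open>auto intro!: bdd_aboveI\<close>)
  thus "g \<in> DomX" by (simp add: DomX_def)
  show "(\<Sum>\<^sub>\<infinity>n. PX g n) \<le> M"
    by (rule infsum_le_finite_sums[OF gs]) (rule fin)
qed

lemma pt_bound:
  assumes "f \<in> DomX" "(\<Sum>\<^sub>\<infinity>n. PX f n) \<le> M"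
  shows "norm (f n) \<le> sqrt (M / mu\<^sup>2)"
proof -
  have mu2: "mu\<^sup>2 > 0" using mu_props(1) by simp
  have "mu\<^sup>2 * nrm f n \<le> PX f n" by (rule nrm_le_PX)
  also have "\<dots> \<le> (\<Sum>\<^sub>\<infinity>n. PX f n)"
    by (rule single_le_infsum) (use assms in \<open>auto simp: DomX_def\<close>)
  also have "\<dots> \<le> M" by (rule assms(2))
  finally have "nrm f n \<le> M / mu\<^sup>2" using mu2 by (simp add: le_divide_eq mult.commute)
  thus ?thesis unfolding nrm_norm by (simp add: real_le_rsqrt)
qed

lemma rho_fin: "finite {n. (rho n)\<^sup>2 < K}"
proof -
  define T where "T = 1 + \<bar>K\<bar> / lam\<^sup>2"
  have l2: "lam\<^sup>2 > 0" using lam by simp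
  have T1: "1 \<le> T" unfolding T_def using l2 by simp
  have sub: "{n. (rho n)\<^sup>2 < K} \<subseteq> {n. c n < T} \<union> {n. c (n + 1) < T}"
  proof
    fix n assume n: "n \<in> {n. (rho n)\<^sup>2 < K}"
    show "n \<in> {n. c n < T} \<union> {n. c (n + 1) < T}"
    proof (rule ccontr)
      assume "n \<notin> {n. c n < T} \<union> {n. c (n + 1) < T}"
      hence ge: "T \<le> c n" "T \<le> c (n + 1)" by auto
      have "c n * 1 \<le> c n * c (n + 1)" using ge T1 cpos[of n] by (intro mult_left_mono) auto
      hence p: "T \<le> c n * c (n + 1)" using ge by simp
      have "T \<le> T * T" using T1 by simp
      also have "\<dots> \<le> (c n * c (n + 1)) * (c n * c (n + 1))" using p T1 by (intro mult_mono) auto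
      finally have "T \<le> (c n * c (n + 1))\<^sup>2" by (simp add: power2_eq_square)
      hence "lam\<^sup>2 * T \<le> lam\<^sup>2 * (c n * c (n + 1))\<^sup>2"
        using l2 by (intro mult_left_mono) auto
      moreover have "lam\<^sup>2 * T = lam\<^sup>2 + \<bar>K\<bar>" unfolding T_def using l2 by (simp add: field_simps)
      moreover have "(w n)\<^sup>2 = lam\<^sup>2 * (c n * c (n + 1))\<^sup>2" unfolding w_def by (simp add: power_mult_distrib)
      ultimately have "K \<le> (w n)\<^sup>2" using l2 by linarith
      hence "K \<le> (rho n)\<^sup>2" using rho_sq[of n] by (simp add: add_increasing2)
      thus False using n by simp
    qed
  qed
  show ?thesis by (rule finite_subset[OF sub]) (simp add: cfin cfin1)
qed


lemma compact_part:
  assumes Rp: "\<And>u. u \<in> l2 \<Longrightarrow> R u \<in> DomX \<and> (\<Sum>\<^sub>\<infinity>n. PX (R u) n) \<le> 4 * QN u"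
  shows "compact_l2op R"
  unfolding compact_l2op_def
proof (intro allI impI)
  fix x :: "nat \<Rightarrow> vec"
  assume a: "(\<forall>k. x k \<in> l2) \<and> (\<exists>B. \<forall>k. l2norm (x k) \<le> B)"
  then obtain B where B: "\<And>k. l2norm (x k) \<le> B" by blast
  have xl: "x k \<in> l2" for k using a by blast
  have qb: "QN (x k) \<le> B\<^sup>2" for k
  proof -
    have "QN (x k) = (sqrt (QN (x k)))\<^sup>2" using QN_nonneg by simp
    also have "\<dots> \<le> B\<^sup>2" using B[of k] by (intro power_mono) (auto simp: l2norm_QN QN_nonneg)
    finally show ?thesis .
  qed
  define M where "M = 4 * B\<^sup>2"
  have M0: "0 \<le> M" unfolding M_def by simp
  define y where "y k = R (x k)" for k
  have yX: "y k \<in> DomX" and yb: "(\<Sum>\<^sub>\<infinity>n. PX (y k) n) \<le> M" for k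
    using Rp[OF xl[of k]] qb[of k] by (auto simp: y_def M_def)
  have nb: "norm (y k n) \<le> sqrt (M / mu\<^sup>2)" for k n by (rule pt_bound[OF yX yb])
  obtain r g where r: "strict_mono r" and conv: "\<And>n. (\<lambda>k. y (r k) n) \<longlonglongrightarrow> g n"
    using extract_sub[of y "\<lambda>n. sqrt (M / mu\<^sup>2)", OF nb] by blast
  have gX: "g \<in> DomX" and gb: "(\<Sum>\<^sub>\<infinity>n. PX g n) \<le> M" using FATOU[of y M r g, OF yX yb conv] by auto
  have gl: "g \<in> l2" by (rule DomX_l2[OF gX])
  have QL: "(\<lambda>k. QN (vsub (y (r k)) g)) \<longlonglongrightarrow> 0"
  proof (rule LIMSEQ_I)
    fix \<epsilon> :: real assume \<epsilon>: "0 < \<epsilon>"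
    define K where "K = 32 * (M + 1) / \<epsilon>"
    have Kpos: "K > 0" unfolding K_def using \<epsilon> M0 by simp
    define F where "F = {n. (rho n)\<^sup>2 < K}"
    have fF: "finite F" unfolding F_def by (rule rho_fin)
    have each: "(\<lambda>k. nrm (vsub (y (r k)) g) n) \<longlonglongrightarrow> 0" for n
    proof -
      have "(\<lambda>k. (norm (y (r k) n - g n))\<^sup>2) \<longlonglongrightarrow> (norm (g n - g n))\<^sup>2"
        by (intro tendsto_intros conv)
      thus ?thesis by (simp add: nrm_norm vsub_eq)
    qed
    have tl: "(\<lambda>k. sum (nrm (vsub (y (r k)) g)) F) \<longlonglongrightarrow> 0"
      by (rule tendsto_null_sum) (rule each)
    then obtain N where N: "\<And>k. k \<ge> N \<Longrightarrow> sum (nrm (vsub (y (r k)) g)) F < \<epsilon> / 2"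
      using \<epsilon> unfolding LIMSEQ_iff by (metis abs_of_nonneg half_gt_zero real_norm_def sum_nonneg nrm_nonneg diff_zero)
    show "\<exists>no. \<forall>k\<ge>no. norm (QN (vsub (y (r k)) g) - 0) < \<epsilon>"
    proof (intro exI allI impI)
      fix k assume k: "k \<ge> N"
      define v where "v = vsub (y (r k)) g"
      have vl: "nrm v summable_on UNIV" unfolding v_def using l2_vsub[OF DomX_l2[OF yX] gl] by (simp add: l2_iff)
      have sy: "PX (y (r k)) summable_on UNIV" using yX by (simp add: DomX_def)
      have sg: "PX g summable_on UNIV" using gX by (simp add: DomX_def)
      have sF: "(\<lambda>n. if n \<in> F then nrm v n else 0) summable_on UNIV"
        by (rule summable_fin_supp[OF fF]) simp
      have s2: "(\<lambda>n. (2 / K) * (PX (y (r k)) n + PX g n)) summable_on UNIV"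
        by (intro summable_on_cmult_right summable_on_add sy sg)
      have pw: "nrm v n \<le> (if n \<in> F then nrm v n else 0) + (2 / K) * (PX (y (r k)) n + PX g n)" for n
      proof (cases "n \<in> F")
        case True
        have "0 \<le> (2 / K) * (PX (y (r k)) n + PX g n)" using Kpos by simp
        thus ?thesis using True by simp
      next
        case False
        hence Kr: "K \<le> (rho n)\<^sup>2" unfolding F_def by simp
        have a: "K * nrm f n \<le> PX f n" for f unfolding PX_def using Kr by (intro mult_right_mono) auto
        have "nrm v n \<le> 2 * nrm (y (r k)) n + 2 * nrm g n"
          unfolding v_def nrm_norm vsub_eq by (rule norm_diff_sq)
        also have "\<dots> \<le> (2 / K) * (PX (y (r k)) n + PX g n)"
          using a[of "y (r k)"] a[of g] Kpos by (simp add: field_simps)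
        finally show ?thesis using False by simp
      qed
      have "QN v \<le> (\<Sum>\<^sub>\<infinity>n. (if n \<in> F then nrm v n else 0) + (2 / K) * (PX (y (r k)) n + PX g n))"
        unfolding QN_def by (rule infsum_mono[OF vl summable_on_add[OF sF s2]]) (rule pw)
      also have "\<dots> = sum (nrm v) F + (2 / K) * ((\<Sum>\<^sub>\<infinity>n. PX (y (r k)) n) + (\<Sum>\<^sub>\<infinity>n. PX g n))"
        using infsum_add[OF sF s2] infsum_fin_supp[OF fF, of "nrm v"]
          infsum_cmult_right[of "2 / K" "\<lambda>n. PX (y (r k)) n + PX g n" UNIV] infsum_add[OF sy sg]
          summable_on_add[OF sy sg] by simp
      also have "\<dots> \<le> sum (nrm v) F + (2 / K) * (M + M)"
        using yb[of "r k"] gb Kpos by (intro add_left_mono mult_left_mono add_mono) auto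
      finally have q: "QN v \<le> sum (nrm v) F + (2 / K) * (M + M)" .
      have bnd: "(2 / K) * (M + M) \<le> \<epsilon> / 8"
        unfolding K_def using \<epsilon> M0 by (simp add: field_simps)
      have "QN v < \<epsilon>"
        using q bnd N[OF k] \<epsilon> unfolding v_def by linarith
      thus "norm (QN (vsub (y (r k)) g) - 0) < \<epsilon>" using QN_nonneg[of v] unfolding v_def by simp
    qed
  qed
  have "(\<lambda>k. l2norm (vsub (R (x (r k))) g)) \<longlonglongrightarrow> sqrt 0"
    unfolding l2norm_QN y_def[symmetric] by (intro tendsto_intros QL)
  thus "\<exists>r u. strict_mono r \<and> u \<in> l2 \<and> (\<lambda>k. l2norm (vsub (R (x (r k))) u)) \<longlonglongrightarrow> 0"
    using r gl by auto
qed

lemma CR: "compact_resolvent (Dlam_dom d c lam) (Dlam d c lam)"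
proof -
  define z where "z = \<i> * complex_of_real mu"
  have s: "mu\<^sup>2 = mu\<^sup>2" ..
  define P where "P u g \<longleftrightarrow> g \<in> DomX \<and> vsub (Dlam d c lam g) (vscale z g) = u \<and> (\<Sum>\<^sub>\<infinity>n. PX g n) \<le> 4 * QN u" for u g
  define R where "R u = (SOME g. P u g)" for u
  have Rp: "P u (R u)" if ul: "u \<in> l2" for u
  proof -
    obtain g where "P u g" using RES[OF s ul] unfolding P_def z_def by blast
    thus ?thesis unfolding R_def by (rule someI[of "P u"])
  qed
  have c1: "\<forall>u\<in>l2. R u \<in> Dlam_dom d c lam \<and> vsub (Dlam d c lam (R u)) (vscale z (R u)) = u"
    using Rp unfolding P_def Dom_eq by blast
  have c2: "\<forall>f\<in>Dlam_dom d c lam. R (vsub (Dlam d c lam f) (vscale z f)) = f"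
  proof
    fix f assume "f \<in> Dlam_dom d c lam"
    hence f: "f \<in> l2" and Af: "Dlam d c lam f \<in> l2" by (auto simp: Dlam_dom_def)
    define u where "u = vsub (Dlam d c lam f) (vscale z f)"
    have u: "u \<in> l2" unfolding u_def by (intro l2_vsub l2_vscale Af f)
    have p: "P u (R u)" by (rule Rp[OF u])
    show "R (vsub (Dlam d c lam f) (vscale z f)) = f"
      unfolding u_def[symmetric]
      by (rule UNIQ[OF s DomX_l2 f]) (use p in \<open>auto simp: P_def u_def z_def\<close>)
  qed
  have c3: "compact_l2op R"
    by (rule compact_part) (use Rp in \<open>auto simp: P_def\<close>)
  show ?thesis unfolding compact_resolvent_def using c1 c2 c3 by blast
qed

end


theorem lemma11:
  fixes d :: "int \<Rightarrow> int \<Rightarrow> real" and c :: "int \<Rightarrow> real" and lam :: real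
  assumes metric_eq: "\<And>x y. d x y = 0 \<longleftrightarrow> x = y"
    and metric_sym: "\<And>x y. d x y = d y x"
    and metric_tri: "\<And>x y z. d x z \<le> d x y + d y z"
    and c_top: "filterlim c at_top at_top"
    and c_bot: "filterlim c at_top at_bot"
    and c_delta: "\<And>n. c n * delta d n \<ge> 1"
    and lam: "lam \<noteq> 0"
  shows "selfadjoint_op (Dlam_dom d c lam) (Dlam d c lam)
         \<and> compact_resolvent (Dlam_dom d c lam) (Dlam d c lam)"
proof -
  have dnn: "0 \<le> d x y" for x y
    using metric_tri[where x=x and y=y and z=x] metric_eq[of x x, THEN iffD2, OF refl] metric_sym[of y x] by linarith
  have dpos: "delta d n > 0" for n
    using dnn[of n "n - 1"] metric_eq[of n "n - 1"] by (simp add: delta_def)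
  have cfin: "finite {n. c n < T}" for T
  proof -
    obtain N1 where N1: "\<And>n. n \<ge> N1 \<Longrightarrow> T \<le> c n"
      using c_top unfolding filterlim_at_top eventually_at_top_linorder by blast
    obtain N2 where N2: "\<And>n. n \<le> N2 \<Longrightarrow> T \<le> c n"
      using c_bot unfolding filterlim_at_top eventually_at_bot_linorder by blast
    have "{n. c n < T} \<subseteq> {N2..N1}"
    proof
      fix n assume "n \<in> {n. c n < T}"
      hence "c n < T" by simp
      hence "\<not> n \<ge> N1" "\<not> n \<le> N2" using N1[of n] N2[of n] by auto
      thus "n \<in> {N2..N1}" by simp
    qed
    thus ?thesis by (rule finite_subset) simp
  qed
  interpret setting d c lam
    by unfold_locales (use dpos c_delta cfin lam in auto)
  show ?thesis using SA CR by blast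
qed

end
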